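(* For all $d\ge1$ and $I,K\in \mathcal I_d$ we have $\lambda(d_I)\geq \lambda (d_K)$ in the dominance order if and only if $I\leq K$.
   Context: $L_0\cong\mathfrak{sl}_5$ (the degree-zero part of $E(5,10)$), with Borel spanned by $x_i\partial_j$ ($i<j$) and $h_{ij}=x_i\partial_i-x_j\partial_j$, acts by the adjoint action on $U_-$, the enveloping algebra of $L_-=\langle\partial_i\rangle\oplus\langle d_{ij}\rangle$ ($d_{ij}=dx_i\wedge dx_j$). $\mathcal I_d$ is the set of $d$-tuples of ordered pairs $(i_l,j_l)\in[5]^2$ and $d_I=d_{i_1j_1}\cdots d_{i_dj_d}$; $d_I$ is a weight vector with weight $\lambda(d_I)$ given by $h_{ij}.d_I=(m_i(I)-m_j(I))d_I$, where $m_k(I)$ is the number of occurrences of $k$ among $i_1,j_1,\dots,i_d,j_d$. The dominance order: $\lambda\geq\lambda'$ iff $\lambda-\lambda'$ is a nonnegative integer combination of the simple roots $\alpha_{12},\alpha_{23},\alpha_{34},\alpha_{45}$. Viewing $I$ as the sequence $(i_1,j_1,\dots,i_d,j_d)$ of $2d$ integers, let $I_o=(i'_1,\dots,i'_{2d})$ be its nondecreasing reordering; $I\leq K$ means $i'_r\leq k'_r$ for all $r=1,\dots,2d$, where $K_o=(k'_1,\dots,k'_{2d})$. *)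

theory Defs
  imports Main
begin

definition index_tuples :: "nat \<Rightarrow> (nat \<times> nat) list set" where
  "index_tuples d = {I. length I = d \<and> (\<forall>(i,j)\<in>set I. i \<in> {1..5} \<and> j \<in> {1..5})}"

definition flat_seq :: "(nat \<times> nat) list \<Rightarrow> nat list" where
  "flat_seq I = concat (map (\<lambda>(i,j). [i,j]) I)"

definition mult_occ :: "nat \<Rightarrow> (nat \<times> nat) list \<Rightarrow> nat" where
  "mult_occ k I = count_list (flat_seq I) k"

text \<open>A weight of sl_5 is represented by its values on the Cartan elements h_ij
  (i,j in [5]). The weight of d_I: h_ij acts by m_i(I) - m_j(I).\<close>
definition weight_dI :: "(nat \<times> nat) list \<Rightarrow> nat \<times> nat \<Rightarrow> int" where
  "weight_dI I = (\<lambda>(i,j). int (mult_occ i I) - int (mult_occ j I))"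

text \<open>Simple root alpha_{k,k+1} (root of x_k d_{k+1}) evaluated on h_ij.\<close>
definition simple_root :: "nat \<Rightarrow> nat \<times> nat \<Rightarrow> int" where
  "simple_root k = (\<lambda>(i,j). (if i = k then 1 else 0) - (if i = k + 1 then 1 else 0)
                          - (if j = k then 1 else 0) + (if j = k + 1 then 1 else 0))"

definition dominates :: "(nat \<times> nat \<Rightarrow> int) \<Rightarrow> (nat \<times> nat \<Rightarrow> int) \<Rightarrow> bool" where
  "dominates lam lam' \<longleftrightarrow> (\<exists>c :: nat \<Rightarrow> nat. \<forall>i\<in>{1..5}. \<forall>j\<in>{1..5}.
      lam (i,j) - lam' (i,j) = (\<Sum>k\<in>{1..4}. int (c k) * simple_root k (i,j)))"

definition tuple_le :: "(nat \<times> nat) list \<Rightarrow> (nat \<times> nat) list \<Rightarrow> bool" where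
  "tuple_le I K \<longleftrightarrow> (\<forall>r < length (flat_seq I).
      sort (flat_seq I) ! r \<le> sort (flat_seq K) ! r)"

end

theory Submission
  imports Defs
begin

lemma len_filter_sort: "length (filter P (sort xs)) = length (filter (P::nat\<Rightarrow>bool) xs)"
  by (simp add: filter_sort)

lemma sorted_nth_le:
  "sorted (xs::nat list) \<Longrightarrow> r < length xs \<Longrightarrow> (xs!r \<le> v \<longleftrightarrow> r < length (filter (\<lambda>x. x \<le> v) xs))"
proof (induction xs arbitrary: r)
  case Nil then show ?case by simp
next
  case (Cons x xs)
  show ?case
  proof (cases "x \<le> v")
    case True
    then show ?thesis using Cons by (cases r) auto
  next
    case False
    have "\<forall>y\<in>set (x#xs). y > v" using Cons.prems(1) False by auto
    then have "filter (\<lambda>x. x \<le> v) (x#xs) = []" by (simp add: filter_empty_conv) (meson not_less)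
    moreover have "(x#xs)!r > v" using \<open>\<forall>y\<in>set (x#xs). y > v\<close> Cons.prems(2) nth_mem by blast
    ultimately show ?thesis by simp
  qed
qed

lemma filter_count:
  "\<forall>x\<in>set xs. x \<ge> (1::nat) \<Longrightarrow> length (filter (\<lambda>x. x \<le> v) xs) = (\<Sum>i\<in>{1..v}. count_list xs i)"
proof (induction xs)
  case Nil then show ?case by simp
next
  case (Cons x xs)
  have "(\<Sum>i\<in>{1..v}. count_list (x#xs) i) = (\<Sum>i\<in>{1..v}. (if x = i then 1 else 0) + count_list xs i)"
    by (rule sum.cong) auto
  also have "\<dots> = (\<Sum>i\<in>{1..v}. (if x = i then 1 else 0)) + (\<Sum>i\<in>{1..v}. count_list xs i)"
    by (simp add: sum.distrib)
  also have "(\<Sum>i\<in>{1..v}. (if x = i then 1 else 0::nat)) = (if x \<le> v then 1 else 0)"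
    using Cons.prems by (simp add: sum.delta)
  finally show ?case using Cons by simp
qed

lemma flat_set: "I \<in> index_tuples d \<Longrightarrow> set (flat_seq I) \<subseteq> {1..5}"
  unfolding index_tuples_def flat_seq_def by auto

lemma flat_len: "length (flat_seq I) = 2 * length I"
  unfolding flat_seq_def by (induction I) auto

lemma tuple_le_iff:
  assumes "length (flat_seq I) = length (flat_seq K)" "set (flat_seq K) \<subseteq> {1..5}"
  shows "tuple_le I K \<longleftrightarrow> (\<forall>v\<in>{1..5}. length (filter (\<lambda>x. x \<le> v) (flat_seq K))
             \<le> length (filter (\<lambda>x. x \<le> v) (flat_seq I)))"
proof -
  define A where "A = sort (flat_seq I)"
  define B where "B = sort (flat_seq K)"
  have sA: "sorted A" and sB: "sorted B" unfolding A_def B_def by auto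
  have lA: "length A = length (flat_seq I)" and lB: "length B = length (flat_seq I)"
    unfolding A_def B_def using assms by auto
  have cA: "\<And>v. length (filter (\<lambda>x. x \<le> v) (flat_seq I)) = length (filter (\<lambda>x. x \<le> v) A)"
    unfolding A_def by (simp add: len_filter_sort)
  have cB: "\<And>v. length (filter (\<lambda>x. x \<le> v) (flat_seq K)) = length (filter (\<lambda>x. x \<le> v) B)"
    unfolding B_def by (simp add: len_filter_sort)
  have setB: "set B \<subseteq> {1..5}" unfolding B_def using assms by simp
  show ?thesis
  proof
    assume T: "tuple_le I K"
    show "\<forall>v\<in>{1..5}. length (filter (\<lambda>x. x \<le> v) (flat_seq K)) \<le> length (filter (\<lambda>x. x \<le> v) (flat_seq I))"
    proof
      fix v :: nat
      let ?c = "length (filter (\<lambda>x. x \<le> v) B)"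
      have "?c \<le> length (filter (\<lambda>x. x \<le> v) A)"
      proof (cases "?c = 0")
        case False
        have r: "?c - 1 < length B" using False length_filter_le[of "\<lambda>x. x \<le> v" B]
          by linarith
        have "B!(?c - 1) \<le> v" using sorted_nth_le[OF sB r] False by simp
        moreover have "A!(?c-1) \<le> B!(?c-1)" using T r lB
          unfolding tuple_le_def A_def B_def by simp
        ultimately have "A!(?c-1) \<le> v" by simp
        then have "?c - 1 < length (filter (\<lambda>x. x \<le> v) A)"
          using sorted_nth_le[OF sA] r lA lB by simp
        then show ?thesis by simp
      qed simp
      then show "length (filter (\<lambda>x. x \<le> v) (flat_seq K)) \<le> length (filter (\<lambda>x. x \<le> v) (flat_seq I))"
        using cA cB by simp
    qed
  next
    assume C: "\<forall>v\<in>{1..5}. length (filter (\<lambda>x. x \<le> v) (flat_seq K)) \<le> length (filter (\<lambda>x. x \<le> v) (flat_seq I))"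
    show "tuple_le I K"
      unfolding tuple_le_def
    proof (intro allI impI)
      fix r assume r: "r < length (flat_seq I)"
      show "sort (flat_seq I) ! r \<le> sort (flat_seq K) ! r"
      proof (rule ccontr)
        assume N: "\<not> ?thesis"
        define v where "v = B!r"
        have rB: "r < length B" using r lB by simp
        have "v \<in> {1..5}" using setB nth_mem[OF rB] unfolding v_def by auto
        have "r < length (filter (\<lambda>x. x \<le> v) B)" using sorted_nth_le[OF sB rB, of v] v_def by simp
        also have "\<dots> \<le> length (filter (\<lambda>x. x \<le> v) A)" using C[rule_format, OF \<open>v \<in> {1..5}\<close>] cA cB by simp
        finally have "A!r \<le> v" using sorted_nth_le[OF sA] r lA by simp
        then show False using N unfolding A_def v_def B_def by simp
      qed
    qed
  qed
qed


lemma sets5: "{1..1::nat} = {1}" "{1..2::nat} = {1,2}" "{1..3::nat} = {1,2,3}"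
  "{1..4::nat} = {1,2,3,4}" "{1..5::nat} = {1,2,3,4,5}"
  "{Suc 0..Suc 0} = {Suc 0}" "{Suc 0..2} = {Suc 0,2}" "{Suc 0..3} = {Suc 0,2,3}"
  "{Suc 0..4} = {Suc 0,2,3,4}" "{Suc 0..5} = {Suc 0,2,3,4,5}" by auto

lemma S_expand:
  assumes "set (flat_seq I) \<subseteq> {1..5}"
  shows "length (filter (\<lambda>x. x \<le> 1) (flat_seq I)) = mult_occ 1 I"
    "length (filter (\<lambda>x. x \<le> 2) (flat_seq I)) = mult_occ 1 I + mult_occ 2 I"
    "length (filter (\<lambda>x. x \<le> 3) (flat_seq I)) = mult_occ 1 I + mult_occ 2 I + mult_occ 3 I"
    "length (filter (\<lambda>x. x \<le> 4) (flat_seq I)) = mult_occ 1 I + mult_occ 2 I + mult_occ 3 I + mult_occ 4 I"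
    "length (flat_seq I) = mult_occ 1 I + mult_occ 2 I + mult_occ 3 I + mult_occ 4 I + mult_occ 5 I"
proof -
  have ge: "\<forall>x\<in>set (flat_seq I). x \<ge> 1" using assms by auto
  note fc = filter_count[OF ge]
  show "length (filter (\<lambda>x. x \<le> 1) (flat_seq I)) = mult_occ 1 I"
    using fc[of 1] by (simp add: sets5 mult_occ_def)
  show "length (filter (\<lambda>x. x \<le> 2) (flat_seq I)) = mult_occ 1 I + mult_occ 2 I"
    using fc[of 2] by (simp add: sets5 mult_occ_def)
  show "length (filter (\<lambda>x. x \<le> 3) (flat_seq I)) = mult_occ 1 I + mult_occ 2 I + mult_occ 3 I"
    using fc[of 3] by (simp add: sets5 mult_occ_def)
  show "length (filter (\<lambda>x. x \<le> 4) (flat_seq I)) = mult_occ 1 I + mult_occ 2 I + mult_occ 3 I + mult_occ 4 I"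
    using fc[of 4] by (simp add: sets5 mult_occ_def)
  have "filter (\<lambda>x. x \<le> 5) (flat_seq I) = flat_seq I" using assms by (auto simp: filter_id_conv)
  then show "length (flat_seq I) = mult_occ 1 I + mult_occ 2 I + mult_occ 3 I + mult_occ 4 I + mult_occ 5 I"
    using fc[of 5] by (simp add: sets5 mult_occ_def)
qed

lemma dom_iff:
  fixes m1 m2 m3 m4 m5 n1 n2 n3 n4 n5 :: int
  assumes "m1 = int (mult_occ 1 I)" "m2 = int (mult_occ 2 I)" "m3 = int (mult_occ 3 I)"
    "m4 = int (mult_occ 4 I)" "m5 = int (mult_occ 5 I)"
    "n1 = int (mult_occ 1 K)" "n2 = int (mult_occ 2 K)" "n3 = int (mult_occ 3 K)"
    "n4 = int (mult_occ 4 K)" "n5 = int (mult_occ 5 K)"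
    and tot: "m1 + m2 + m3 + m4 + m5 = n1 + n2 + n3 + n4 + n5"
  shows "dominates (weight_dI I) (weight_dI K) \<longleftrightarrow>
     (n1 \<le> m1 \<and> n1 + n2 \<le> m1 + m2 \<and> n1 + n2 + n3 \<le> m1 + m2 + m3 \<and> n1 + n2 + n3 + n4 \<le> m1 + m2 + m3 + m4)"
proof
  assume "dominates (weight_dI I) (weight_dI K)"
  then obtain c where c: "\<forall>i\<in>{1..5}. \<forall>j\<in>{1..5}. weight_dI I (i,j) - weight_dI K (i,j)
      = (\<Sum>k\<in>{1..4}. int (c k) * simple_root k (i,j))"
    unfolding dominates_def by blast
  have e1: "m1 - m5 - (n1 - n5) = int (c 1) + int (c 4)"
    using c[rule_format, of 1 5] assms by (simp add: sets5 weight_dI_def simple_root_def)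
  have e2: "m2 - m5 - (n2 - n5) = int (c 2) - int (c 1) + int (c 4)"
    using c[rule_format, of 2 5] assms by (simp add: sets5 weight_dI_def simple_root_def)
  have e3: "m3 - m5 - (n3 - n5) = int (c 3) - int (c 2) + int (c 4)"
    using c[rule_format, of 3 5] assms by (simp add: sets5 weight_dI_def simple_root_def)
  have e4: "m4 - m5 - (n4 - n5) = int (c 4) - int (c 3) + int (c 4)"
    using c[rule_format, of 4 5] assms by (simp add: sets5 weight_dI_def simple_root_def)
  show "n1 \<le> m1 \<and> n1 + n2 \<le> m1 + m2 \<and> n1 + n2 + n3 \<le> m1 + m2 + m3 \<and> n1 + n2 + n3 + n4 \<le> m1 + m2 + m3 + m4"
    using e1 e2 e3 e4 tot by linarith
next
  assume H: "n1 \<le> m1 \<and> n1 + n2 \<le> m1 + m2 \<and> n1 + n2 + n3 \<le> m1 + m2 + m3 \<and> n1 + n2 + n3 + n4 \<le> m1 + m2 + m3 + m4"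
  define c :: "nat \<Rightarrow> nat" where "c k = (if k = 1 then nat (m1 - n1) else if k = 2 then nat (m1 + m2 - n1 - n2)
     else if k = 3 then nat (m1 + m2 + m3 - n1 - n2 - n3) else nat (m1 + m2 + m3 + m4 - n1 - n2 - n3 - n4))" for k
  have c1: "int (c 1) = m1 - n1" and c2: "int (c 2) = m1 + m2 - n1 - n2"
    and c3: "int (c 3) = m1 + m2 + m3 - n1 - n2 - n3" and c4: "int (c 4) = m1 + m2 + m3 + m4 - n1 - n2 - n3 - n4"
    using H by (auto simp: c_def)
  show "dominates (weight_dI I) (weight_dI K)"
    unfolding dominates_def
  proof (intro exI[of _ c] ballI)
    fix i j :: nat assume "i \<in> {1..5}" "j \<in> {1..5}"
    then have "i = 1 \<or> i = 2 \<or> i = 3 \<or> i = 4 \<or> i = 5" "j = 1 \<or> j = 2 \<or> j = 3 \<or> j = 4 \<or> j = 5" by auto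
    then show "weight_dI I (i, j) - weight_dI K (i, j) = (\<Sum>k\<in>{1..4}. int (c k) * simple_root k (i, j))"
      apply (elim disjE)
      apply (simp_all only: sets5 weight_dI_def simple_root_def assms(1-10)[symmetric] split_conv sum.insert finite.intros
             insert_iff empty_iff)
      using c1 c2 c3 c4 tot by simp_all
  qed
qed

theorem proposition6p2:
  fixes d :: nat and I K :: "(nat \<times> nat) list"
  assumes "d \<ge> 1" and "I \<in> index_tuples d" and "K \<in> index_tuples d"
  shows "dominates (weight_dI I) (weight_dI K) \<longleftrightarrow> tuple_le I K"
proof -
  have sI: "set (flat_seq I) \<subseteq> {1..5}" and sK: "set (flat_seq K) \<subseteq> {1..5}"
    using flat_set assms by blast+
  have len: "length (flat_seq I) = length (flat_seq K)"
    using assms(2,3) by (simp add: flat_len index_tuples_def)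
  note SI = S_expand[OF sI] and SK = S_expand[OF sK]
  have tot: "int (mult_occ 1 I) + int (mult_occ 2 I) + int (mult_occ 3 I) + int (mult_occ 4 I) + int (mult_occ 5 I)
    = int (mult_occ 1 K) + int (mult_occ 2 K) + int (mult_occ 3 K) + int (mult_occ 4 K) + int (mult_occ 5 K)"
    using SI(5) SK(5) len by linarith
  have D: "dominates (weight_dI I) (weight_dI K) \<longleftrightarrow>
     (int (mult_occ 1 K) \<le> int (mult_occ 1 I) \<and>
      int (mult_occ 1 K) + int (mult_occ 2 K) \<le> int (mult_occ 1 I) + int (mult_occ 2 I) \<and>
      int (mult_occ 1 K) + int (mult_occ 2 K) + int (mult_occ 3 K) \<le> int (mult_occ 1 I) + int (mult_occ 2 I) + int (mult_occ 3 I) \<and>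
      int (mult_occ 1 K) + int (mult_occ 2 K) + int (mult_occ 3 K) + int (mult_occ 4 K) \<le> int (mult_occ 1 I) + int (mult_occ 2 I) + int (mult_occ 3 I) + int (mult_occ 4 I))"
    by (rule dom_iff[OF refl refl refl refl refl refl refl refl refl refl tot])
  have T: "tuple_le I K \<longleftrightarrow> (\<forall>v\<in>{1,2,3,4,5}. length (filter (\<lambda>x. x \<le> v) (flat_seq K))
             \<le> length (filter (\<lambda>x. x \<le> v) (flat_seq I)))"
    using tuple_le_iff[OF len sK] by (simp add: sets5)
  have f5: "filter (\<lambda>x. x \<le> 5) (flat_seq I) = flat_seq I" "filter (\<lambda>x. x \<le> 5) (flat_seq K) = flat_seq K"
    using sI sK by (auto simp: filter_id_conv)
  show ?thesis unfolding D T using SI SK f5 len by auto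
qed

end
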